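(* Let $A,B\in\mathcal{F}_2$ be commonly ordered configurations. For any fixed $d\ge d(A,B)$, there is a feasible schedule $M$ from $A$ to $B$ with makespan exactly $d$ in which each robot makes at most one turn.
   Context: Robots are axis-parallel unit squares: a robot at $p$ occupies $p+\boxdot$, $\boxdot=\{q:\|q\|_\infty\le1/2\}$. Distances use the $L_1$ norm $\|p\|=|x(p)|+|y(p)|$. A configuration of two robots is a pair $(p_1,p_2)$ with $\|p_1-p_2\|_\infty\ge 1$; $\mathcal{F}_2$ is their set. A trajectory from $a$ to $b$ over $T=[t_0,t_1]$ is a $1$-Lipschitz (w.r.t. $L_1$) map $m:T\to\mathbb{R}^2$, $m(t_0)=a$, $m(t_1)=b$, whose image is a polygonal chain; a turn is a point of the image where two segments of different orientations meet. A schedule $M=(m_1,m_2)$ over $T$ is feasible if $M(t)\in\mathcal{F}_2$ for all $t$; its makespan is $t_1-t_0$. The diameter is $d(A,B)=\max_i\|a_i-b_i\|$. The four orderings are $\mathcal{F}_2^{\rightarrow}=\{(p_1,p_2)\in\mathcal{F}_2: x(p_1)\ge x(p_2)+1\}$, $\mathcal{F}_2^{\leftarrow}=\{x(p_2)\ge x(p_1)+1\}$, $\mathcal{F}_2^{\uparrow}=\{y(p_1)\ge y(p_2)+1\}$, $\mathcal{F}_2^{\downarrow}=\{y(p_2)\ge y(p_1)+1\}$. Two configurations are commonly ordered if both lie in the same ordering. *)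

theory Defs
  imports "HOL-Analysis.Analysis"
begin

type_synonym pt = "real \<times> real"

definition l1 :: "pt \<Rightarrow> real" where
  "l1 p = \<bar>fst p\<bar> + \<bar>snd p\<bar>"

definition linf :: "pt \<Rightarrow> real" where
  "linf p = max \<bar>fst p\<bar> \<bar>snd p\<bar>"

definition F2 :: "(pt \<times> pt) set" where
  "F2 = {(p1, p2). linf (p1 - p2) \<ge> 1}"

definition F2_right :: "(pt \<times> pt) set" where
  "F2_right = {(p1, p2). (p1, p2) \<in> F2 \<and> fst p1 \<ge> fst p2 + 1}"
definition F2_left :: "(pt \<times> pt) set" where
  "F2_left = {(p1, p2). (p1, p2) \<in> F2 \<and> fst p2 \<ge> fst p1 + 1}"
definition F2_up :: "(pt \<times> pt) set" where
  "F2_up = {(p1, p2). (p1, p2) \<in> F2 \<and> snd p1 \<ge> snd p2 + 1}"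
definition F2_down :: "(pt \<times> pt) set" where
  "F2_down = {(p1, p2). (p1, p2) \<in> F2 \<and> snd p2 \<ge> snd p1 + 1}"

definition commonly_ordered :: "pt \<times> pt \<Rightarrow> pt \<times> pt \<Rightarrow> bool" where
  "commonly_ordered A B \<longleftrightarrow>
     (\<exists>Ord \<in> {F2_right, F2_left, F2_up, F2_down}. A \<in> Ord \<and> B \<in> Ord)"

definition diam :: "pt \<times> pt \<Rightarrow> pt \<times> pt \<Rightarrow> real" where
  "diam A B = max (l1 (fst A - fst B)) (l1 (snd A - snd B))"

definition polygonal_chain :: "pt set \<Rightarrow> bool" where
  "polygonal_chain S \<longleftrightarrow> (\<exists>ps. ps \<noteq> [] \<and>
     S = {hd ps} \<union> (\<Union>(p, q) \<in> set (zip ps (tl ps)). closed_segment p q))"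

definition trajectory :: "(real \<Rightarrow> pt) \<Rightarrow> real \<Rightarrow> real \<Rightarrow> pt \<Rightarrow> pt \<Rightarrow> bool" where
  "trajectory m t0 t1 a b \<longleftrightarrow> t0 \<le> t1 \<and> m t0 = a \<and> m t1 = b \<and>
     (\<forall>s \<in> {t0..t1}. \<forall>t \<in> {t0..t1}. l1 (m s - m t) \<le> \<bar>s - t\<bar>) \<and>
     polygonal_chain (m ` {t0..t1})"

definition at_most_one_turn :: "(real \<Rightarrow> pt) \<Rightarrow> real \<Rightarrow> real \<Rightarrow> bool" where
  "at_most_one_turn m t0 t1 \<longleftrightarrow>
     (\<exists>c. m ` {t0..t1} = closed_segment (m t0) c \<union> closed_segment c (m t1))"

definition feasible_schedule :: "(real \<Rightarrow> pt) \<Rightarrow> (real \<Rightarrow> pt) \<Rightarrow> real \<Rightarrow> real \<Rightarrow> bool" where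
  "feasible_schedule m1 m2 t0 t1 \<longleftrightarrow> (\<forall>t \<in> {t0..t1}. (m1 t, m2 t) \<in> F2)"

end

theory Submission
  imports Defs
begin

definition lin :: "real \<Rightarrow> pt \<Rightarrow> pt \<Rightarrow> real \<Rightarrow> pt" where
  "lin d a b t = a + (t / d) *\<^sub>R (b - a)"

lemma l1_scale: "l1 (c *\<^sub>R p) = \<bar>c\<bar> * l1 p"
  by (cases p) (simp add: l1_def abs_mult distrib_left)

lemma lin_image:
  assumes "d > 0"
  shows "lin d a b ` {0..d} = closed_segment a b"
proof
  show "lin d a b ` {0..d} \<subseteq> closed_segment a b"
  proof
    fix x assume "x \<in> lin d a b ` {0..d}"
    then obtain t where t: "t \<in> {0..d}" "x = lin d a b t" by auto
    have "0 \<le> t / d" "t / d \<le> 1" using t assms by auto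
    moreover have "x = (1 - t/d) *\<^sub>R a + (t/d) *\<^sub>R b"
      using t by (simp add: lin_def algebra_simps)
    ultimately show "x \<in> closed_segment a b" unfolding closed_segment_def by blast
  qed
next
  show "closed_segment a b \<subseteq> lin d a b ` {0..d}"
  proof
    fix x assume "x \<in> closed_segment a b"
    then obtain u where u: "0 \<le> u" "u \<le> 1" "x = (1 - u) *\<^sub>R a + u *\<^sub>R b"
      unfolding closed_segment_def by blast
    have "x = lin d a b (u * d)" using u assms by (simp add: lin_def algebra_simps)
    moreover have "u * d \<in> {0..d}" using u assms by (simp add: mult_left_le_one_le)
    ultimately show "x \<in> lin d a b ` {0..d}" by blast
  qed
qed

lemma lin_traj:
  assumes "d \<ge> 0" "l1 (a - b) \<le> d"
  shows "trajectory (lin d a b) 0 d a b \<and> at_most_one_turn (lin d a b) 0 d"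
proof (cases "d = 0")
  case True
  have ab: "a = b" using assms True
  proof -
    have "\<bar>fst a - fst b\<bar> + \<bar>snd a - snd b\<bar> \<le> 0" using assms True by (simp add: l1_def)
    hence "fst a = fst b" "snd a = snd b" by linarith+
    thus ?thesis by (simp add: prod_eq_iff)
  qed
  have img: "lin d a b ` {0..d} = {a}" using True by (simp add: lin_def)
  have s1: "lin d a b ` {0..d} = closed_segment (lin d a b 0) a \<union> closed_segment a (lin d a b d)"
    using img True by (simp add: lin_def)
  have s2: "polygonal_chain (lin d a b ` {0..d})"
    unfolding polygonal_chain_def img by (intro exI[of _ "[a]"]) simp
  have s3: "at_most_one_turn (lin d a b) 0 d" unfolding at_most_one_turn_def using s1 by blast
  show ?thesis unfolding trajectory_def
    using True ab s3 s2
    by (auto simp: lin_def l1_def)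
next
  case False
  hence dp: "d > 0" using assms by simp
  have e0: "lin d a b 0 = a" and e1: "lin d a b d = b" using dp by (simp_all add: lin_def)
  have lip: "l1 (lin d a b s - lin d a b t) \<le> \<bar>s - t\<bar>" for s t
  proof -
    have "lin d a b s - lin d a b t = ((s - t) / d) *\<^sub>R (b - a)"
      by (simp add: lin_def algebra_simps diff_divide_distrib)
    hence "l1 (lin d a b s - lin d a b t) = (\<bar>s - t\<bar> / d) * l1 (b - a)"
      using dp by (simp add: l1_scale)
    also have "l1 (b - a) = l1 (a - b)" by (cases a, cases b) (simp add: l1_def abs_minus_commute)
    also have "(\<bar>s - t\<bar> / d) * l1 (a - b) \<le> (\<bar>s - t\<bar> / d) * d"
      using assms dp by (intro mult_left_mono) auto
    also have "\<dots> = \<bar>s - t\<bar>" using dp by simp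
    finally show ?thesis .
  qed
  have pc: "polygonal_chain (closed_segment a b)"
    unfolding polygonal_chain_def by (intro exI[of _ "[a,b]"]) auto
  have img: "lin d a b ` {0..d} = closed_segment a b" by (rule lin_image[OF dp])
  have s3: "at_most_one_turn (lin d a b) 0 d" unfolding at_most_one_turn_def e0 e1 img
    by (intro exI[of _ b]) (simp add: insert_absorb)
  show ?thesis unfolding trajectory_def
    using dp e0 e1 lip pc img s3 by auto
qed

lemma lin_diff:
  assumes "d > 0" "t \<in> {0..d}"
  shows "\<exists>s. 0 \<le> s \<and> s \<le> 1 \<and>
    lin d a1 b1 t - lin d a2 b2 t = (1 - s) *\<^sub>R (a1 - a2) + s *\<^sub>R (b1 - b2)"
  using assms by (intro exI[of _ "t/d"]) (auto simp: lin_def algebra_simps)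

lemma conv_ge:
  assumes "(x::real) \<ge> 1" "y \<ge> 1" "0 \<le> s" "s \<le> 1"
  shows "(1 - s) * x + s * y \<ge> 1"
proof -
  have "(1 - s) * x \<ge> (1 - s) * 1" using assms by (intro mult_left_mono) auto
  moreover have "s * y \<ge> s * 1" using assms by (intro mult_left_mono) auto
  ultimately show ?thesis by (simp add: algebra_simps)
qed

lemma feas:
  assumes "d \<ge> 0" "commonly_ordered (a1, a2) (b1, b2)" "(a1, a2) \<in> F2"
  shows "feasible_schedule (lin d a1 b1) (lin d a2 b2) 0 d"
  unfolding feasible_schedule_def
proof
  fix t assume t: "t \<in> {0..d}"
  show "(lin d a1 b1 t, lin d a2 b2 t) \<in> F2"
  proof (cases "d = 0")
    case True
    then show ?thesis using t assms by (simp add: lin_def)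
  next
    case False
    hence dp: "d > 0" using assms by simp
    obtain s where s: "0 \<le> s" "s \<le> 1"
      "lin d a1 b1 t - lin d a2 b2 t = (1 - s) *\<^sub>R (a1 - a2) + s *\<^sub>R (b1 - b2)"
      using lin_diff[OF dp t] by blast
    define D where "D = lin d a1 b1 t - lin d a2 b2 t"
    have fD: "fst D = (1 - s) * (fst a1 - fst a2) + s * (fst b1 - fst b2)"
      and sD: "snd D = (1 - s) * (snd a1 - snd a2) + s * (snd b1 - snd b2)"
      using s(3) unfolding D_def by simp_all
    have "\<bar>fst D\<bar> \<ge> 1 \<or> \<bar>snd D\<bar> \<ge> 1"
      using assms(2) unfolding commonly_ordered_def
    proof (elim bexE)
      fix Ord assume O: "Ord \<in> {F2_right, F2_left, F2_up, F2_down}"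
        and AB: "(a1, a2) \<in> Ord \<and> (b1, b2) \<in> Ord"
      from O show ?thesis
      proof (elim insertE emptyE)
        assume "Ord = F2_right"
        hence "fst D \<ge> 1" using AB s fD conv_ge[of "fst a1 - fst a2" "fst b1 - fst b2" s]
          by (simp add: F2_right_def)
        thus ?thesis by linarith
      next
        assume "Ord = F2_left"
        hence "- fst D \<ge> 1" using AB s fD conv_ge[of "fst a2 - fst a1" "fst b2 - fst b1" s]
          by (simp add: F2_left_def algebra_simps)
        thus ?thesis by linarith
      next
        assume "Ord = F2_up"
        hence "snd D \<ge> 1" using AB s sD conv_ge[of "snd a1 - snd a2" "snd b1 - snd b2" s]
          by (simp add: F2_up_def)
        thus ?thesis by linarith
      next
        assume "Ord = F2_down"
        hence "- snd D \<ge> 1" using AB s sD conv_ge[of "snd a2 - snd a1" "snd b2 - snd b1" s]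
          by (simp add: F2_down_def algebra_simps)
        thus ?thesis by linarith
      qed
    qed
    hence "linf D \<ge> 1" unfolding linf_def by linarith
    thus ?thesis unfolding F2_def D_def by simp
  qed
qed

theorem lemma3p1:
  fixes A B :: "pt \<times> pt" and d :: real
  assumes "A \<in> F2" and "B \<in> F2"
    and "commonly_ordered A B"
    and "d \<ge> diam A B"
  shows "\<exists>t0 t1 m1 m2.
           trajectory m1 t0 t1 (fst A) (fst B) \<and>
           trajectory m2 t0 t1 (snd A) (snd B) \<and>
           feasible_schedule m1 m2 t0 t1 \<and>
           t1 - t0 = d \<and>
           at_most_one_turn m1 t0 t1 \<and> at_most_one_turn m2 t0 t1"
proof -
  obtain a1 a2 where A: "A = (a1, a2)" by (cases A)
  obtain b1 b2 where B: "B = (b1, b2)" by (cases B)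
  have l1nn: "l1 p \<ge> 0" for p unfolding l1_def by simp
  have d1: "l1 (a1 - b1) \<le> d" and d2: "l1 (a2 - b2) \<le> d"
    using assms(4) unfolding diam_def A B by auto
  have d0: "d \<ge> 0" using d1 l1nn[of "a1 - b1"] by linarith
  have t1: "trajectory (lin d a1 b1) 0 d a1 b1 \<and> at_most_one_turn (lin d a1 b1) 0 d"
    by (rule lin_traj[OF d0 d1])
  have t2: "trajectory (lin d a2 b2) 0 d a2 b2 \<and> at_most_one_turn (lin d a2 b2) 0 d"
    by (rule lin_traj[OF d0 d2])
  have f: "feasible_schedule (lin d a1 b1) (lin d a2 b2) 0 d"
    using feas[OF d0] assms(1,3) A B by simp
  show ?thesis using t1 t2 f A B by (intro exI[of _ 0] exI[of _ d] exI[of _ "lin d a1 b1"] exI[of _ "lin d a2 b2"]) simp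
qed

end
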